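(* Let $d,q$ be integers with $0\le q<d$, $\gcd(d,q)=1$ and $d\mid q^3+1$, let $\xi$ be a primitive $d$-th root of unity, and $G=\langle\mathrm{diag}(1,\xi,\xi^q),B\rangle\subset\mathrm{GL}_3(\mathbb{C})$ with $B$ the cyclic permutation matrix $(x,y,z)\mapsto(y,z,x)$. Then the number of conjugacy classes of $G$ equals $\frac{d^2+8\gcd(d,q^2-q+1)}{3}$. *)

theory Defs
  imports "HOL-Analysis.Analysis"
begin

inductive_set gen_mat_group :: "(complex^'n^'n) set \<Rightarrow> (complex^'n^'n) set"
  for S :: "(complex^'n^'n) set" where
  one: "mat 1 \<in> gen_mat_group S"
| gen: "A \<in> S \<Longrightarrow> A \<in> gen_mat_group S"
| mult: "A \<in> gen_mat_group S \<Longrightarrow> C \<in> gen_mat_group S \<Longrightarrow> A ** C \<in> gen_mat_group S"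
| inv: "A \<in> gen_mat_group S \<Longrightarrow> matrix_inv A \<in> gen_mat_group S"

definition conj_class :: "(complex^'n^'n) set \<Rightarrow> complex^'n^'n \<Rightarrow> (complex^'n^'n) set" where
  "conj_class G g = {h ** g ** matrix_inv h | h. h \<in> G}"

definition conj_classes :: "(complex^'n^'n) set \<Rightarrow> (complex^'n^'n) set set" where
  "conj_classes G = conj_class G ` G"

definition primitive_root_of_unity :: "nat \<Rightarrow> complex \<Rightarrow> bool" where
  "primitive_root_of_unity d \<xi> \<longleftrightarrow> d > 0 \<and> \<xi> ^ d = 1 \<and> (\<forall>k. 0 < k \<and> k < d \<longrightarrow> \<xi> ^ k \<noteq> 1)"

definition diagA :: "complex \<Rightarrow> nat \<Rightarrow> complex^3^3" where
  "diagA \<xi> q = vector [vector [1, 0, 0], vector [0, \<xi>, 0], vector [0, 0, \<xi> ^ q]]"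

definition permB :: "complex^3^3" where
  "permB = vector [vector [0, 1, 0], vector [0, 0, 1], vector [1, 0, 0]]"

end

theory Submission
  imports Defs
begin

lemma t3: "(3::3) = 0" by simp
lemma t4[simp]: "(4::3) = 1" by simp
lemma t5[simp]: "(5::3) = 2" by simp
lemma ex3: "(i::3) = 0 \<or> i = 1 \<or> i = 2" using exhaust_3[of i] t3 by metis

definition Mx :: "complex \<Rightarrow> (3 \<Rightarrow> int) \<Rightarrow> 3 \<Rightarrow> complex^3^3" where
 "Mx \<xi> x k = (\<chi> i j. if j = i + k then \<xi> powi (x i) else 0)"

lemma Mx_mult:
  assumes "\<xi> \<noteq> 0"
  shows "Mx \<xi> x k ** Mx \<xi> y l = Mx \<xi> (\<lambda>i. x i + y (i+k)) (k+l)"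
proof -
  have "(\<Sum>m\<in>UNIV. (if m = i + k then \<xi> powi x i else 0) * (if j = m + l then \<xi> powi y m else 0))
     = (if j = i + (k + l) then \<xi> powi (x i + y (i + k)) else 0)" for i j :: 3
  proof -
    have "(\<Sum>m\<in>UNIV. (if m = i + k then \<xi> powi x i else 0) * (if j = m + l then \<xi> powi y m else 0))
      = (\<Sum>m\<in>UNIV. if m = i + k then \<xi> powi x i * (if j = m + l then \<xi> powi y m else 0) else 0)"
      by (rule sum.cong) auto
    also have "\<dots> = \<xi> powi x i * (if j = i + k + l then \<xi> powi y (i+k) else 0)"
      by (simp add: sum.delta')
    finally show ?thesis using assms by (simp add: power_int_add add.assoc)
  qed
  then show ?thesis unfolding Mx_def by (simp add: matrix_matrix_mult_def vec_eq_iff)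
qed

lemma Mx_one: "Mx \<xi> (\<lambda>i. 0) 0 = mat 1"
  unfolding Mx_def mat_def by (simp add: vec_eq_iff)

lemma matrix_inv_eq:
  fixes A B :: "'a::semiring_1^'n^'n"
  assumes "A ** B = mat 1" "B ** A = mat 1"
  shows "matrix_inv A = B"
proof -
  let ?C = "matrix_inv A"
  have "A ** ?C = mat 1 \<and> ?C ** A = mat 1"
    unfolding matrix_inv_def by (rule someI[of _ B]) (use assms in auto)
  then have "?C = ?C ** (A ** B)" using assms by (simp add: matrix_mul_rid)
  also have "\<dots> = (?C ** A) ** B" by (simp add: matrix_mul_assoc)
  also have "\<dots> = B" using \<open>A ** ?C = mat 1 \<and> ?C ** A = mat 1\<close> by (simp add: matrix_mul_lid)
  finally show ?thesis .
qed

lemma Mx_cong: "(\<And>i. x i = y i) \<Longrightarrow> k = l \<Longrightarrow> Mx \<xi> x k = Mx \<xi> y l" by (subgoal_tac "x = y") auto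

lemma Mx_inv:
  assumes "\<xi> \<noteq> 0"
  shows "matrix_inv (Mx \<xi> x k) = Mx \<xi> (\<lambda>i. - x (i - k)) (-k)"
  apply (rule matrix_inv_eq)
  apply (simp_all add: Mx_mult[OF assms])
  apply (subst Mx_one[symmetric], rule Mx_cong, simp_all)+
  done


lemma prim_nz: "primitive_root_of_unity d \<xi> \<Longrightarrow> \<xi> \<noteq> 0"
  unfolding primitive_root_of_unity_def by (metis power_0_left zero_neq_one not_gr0)

lemma prim_pow_nat: assumes "primitive_root_of_unity d \<xi>"
  shows "\<xi> ^ n = 1 \<longleftrightarrow> d dvd n"
proof
  have d: "d > 0" "\<xi> ^ d = 1" "\<And>k. 0 < k \<Longrightarrow> k < d \<Longrightarrow> \<xi> ^ k \<noteq> 1"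
    using assms unfolding primitive_root_of_unity_def by auto
  have eq: "\<xi> ^ n = \<xi> ^ (n mod d)"
  proof -
    have "\<xi> ^ n = \<xi> ^ (d * (n div d) + n mod d)" by simp
    also have "\<dots> = (\<xi> ^ d) ^ (n div d) * \<xi> ^ (n mod d)" by (simp only: power_add power_mult)
    finally show ?thesis using d by simp
  qed
  { assume "\<xi> ^ n = 1"
    then have "\<xi> ^ (n mod d) = 1" using eq by simp
    then have "n mod d = 0" using d(3)[of "n mod d"] d(1) by (meson mod_less_divisor not_gr0)
    then show "d dvd n" by auto }
  { assume "d dvd n" then show "\<xi> ^ n = 1" using eq by simp }
qed

lemma prim_powi: assumes "primitive_root_of_unity d \<xi>"
  shows "\<xi> powi n = 1 \<longleftrightarrow> int d dvd n"
proof (cases "n \<ge> 0")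
  case True
  then have "\<xi> powi n = \<xi> ^ nat n" by (metis nat_0_le power_int_of_nat)
  moreover have "int d dvd n \<longleftrightarrow> d dvd nat n" using True by (metis int_dvd_int_iff nat_0_le)
  ultimately show ?thesis using prim_pow_nat[OF assms, of "nat n"] by simp
next
  case False
  then have "\<xi> powi n = inverse (\<xi> ^ nat (-n))"
    by (metis add.inverse_inverse neg_0_le_iff_le nat_0_le nle_le power_int_minus power_int_of_nat)
  then have "\<xi> powi n = 1 \<longleftrightarrow> \<xi> ^ nat (-n) = 1" by (metis inverse_1 inverse_inverse_eq)
  moreover have "int d dvd n \<longleftrightarrow> d dvd nat (-n)" using False
    by (metis dvd_minus_iff int_dvd_int_iff nat_0_le neg_0_le_iff_le nle_le)
  ultimately show ?thesis using prim_pow_nat[OF assms, of "nat (-n)"] by simp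
qed

lemma prim_powi_eq: assumes "primitive_root_of_unity d \<xi>"
  shows "\<xi> powi a = \<xi> powi b \<longleftrightarrow> int d dvd (a - b)"
proof -
  have nz: "\<xi> \<noteq> 0" using prim_nz[OF assms] .
  have "\<xi> powi a = \<xi> powi (a - b) * \<xi> powi b" using nz by (simp add: power_int_add[symmetric])
  moreover have "\<xi> powi b \<noteq> 0" using nz by simp
  ultimately have "\<xi> powi a = \<xi> powi b \<longleftrightarrow> \<xi> powi (a - b) = 1" by auto
  then show ?thesis using prim_powi[OF assms] by simp
qed

lemma Mx_congr: assumes "primitive_root_of_unity d \<xi>" "\<And>i. int d dvd (x i - y i)"
  shows "Mx \<xi> x k = Mx \<xi> y k"
  unfolding Mx_def using assms prim_powi_eq[OF assms(1)] by (simp add: vec_eq_iff)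

lemma Mx_eqD: assumes "primitive_root_of_unity d \<xi>" "Mx \<xi> x k = Mx \<xi> y l"
  shows "k = l \<and> (\<forall>i. int d dvd (x i - y i))"
proof -
  have nz: "\<xi> \<noteq> 0" using prim_nz[OF assms(1)] .
  have e: "\<And>i j. (if j = i + k then \<xi> powi (x i) else 0) = (if j = i + l then \<xi> powi (y i) else 0)"
    using assms(2) unfolding Mx_def by (simp add: vec_eq_iff)
  have "\<xi> powi x 0 = (if k = 0 + l then \<xi> powi y 0 else 0)" using e[where i=0 and j=k] by (simp only: add_0_left if_True refl)
  then have "k = l" using nz by (auto split: if_splits)
  moreover have "int d dvd (x i - y i)" for i
    using e[where i=i and j="i+k"] \<open>k = l\<close> prim_powi_eq[OF assms(1)] by simp
  ultimately show ?thesis by auto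
qed

definition vec3 :: "int \<Rightarrow> int \<Rightarrow> int \<Rightarrow> 3 \<Rightarrow> int" where
  "vec3 a b c = (\<lambda>i. if i = 1 then a else if i = 2 then b else c)"

lemma vec3_simps[simp]: "vec3 a b c 1 = a" "vec3 a b c 2 = b" "vec3 a b c 0 = c" "vec3 a b c 3 = c"
  unfolding vec3_def by simp_all

lemma forall3: "(\<forall>i::3. P i) \<longleftrightarrow> P 1 \<and> P 2 \<and> P 3" by (metis exhaust_3)

lemma diagA_Mx: "diagA \<xi> q = Mx \<xi> (vec3 0 1 (int q)) 0"
  unfolding diagA_def Mx_def vec_eq_iff forall3
  by (simp add: vector_3 power_int_of_nat)

lemma permB_Mx: "permB = Mx \<xi> (\<lambda>i. 0) 1"
  unfolding permB_def Mx_def vec_eq_iff forall3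
  by (simp add: vector_3)

declare t3[simp]

definition Lset :: "nat \<Rightarrow> nat \<Rightarrow> (3 \<Rightarrow> int) set" where
 "Lset d q = {x. int d dvd (int q ^ 2 * x 1 - int q * x 2 + x 3)}"

definition Gset :: "complex \<Rightarrow> nat \<Rightarrow> nat \<Rightarrow> (complex^3^3) set" where
 "Gset \<xi> d q = {Mx \<xi> x k | x k. x \<in> Lset d q}"


lemma orbit_count:
  assumes fin: "finite X" and tX: "\<And>x. x \<in> X \<Longrightarrow> t x \<in> X" and t3: "\<And>x. x \<in> X \<Longrightarrow> t (t (t x)) = x"
  shows "3 * card ((\<lambda>x. {x, t x, t (t x)}) ` X) = card X + 2 * card {x\<in>X. t x = x}"
proof -
  let ?O = "\<lambda>x. {x, t x, t (t x)}"
  define F where "F = {x\<in>X. t x = x}"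
  define N where "N = X - F"
  have XFN: "X = F \<union> N" "F \<inter> N = {}" unfolding F_def N_def by auto
  have finF: "finite F" "finite N" using fin unfolding F_def N_def by auto
  have OF: "?O x = {x}" if "x \<in> F" for x using that unfolding F_def by auto
  have Nprops: "t x \<noteq> x \<and> t (t x) \<noteq> t x \<and> t (t x) \<noteq> x" if "x \<in> N" for x
  proof -
    have x: "x \<in> X" "t x \<noteq> x" using that unfolding N_def F_def by auto
    have a: "t (t x) \<noteq> t x"
    proof
      assume "t (t x) = t x" then have "t (t (t x)) = t (t x)" by simp
      then show False using t3[OF x(1)] x(2) \<open>t (t x) = t x\<close> by simp
    qed
    have b: "t (t x) \<noteq> x"
    proof
      assume "t (t x) = x" then have "t (t (t x)) = t x" by simp
      then show False using t3[OF x(1)] x(2) by simp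
    qed
    show ?thesis using x a b by blast
  qed
  have ON_sub: "?O x \<subseteq> N" if "x \<in> N" for x
  proof -
    have x: "x \<in> X" using that unfolding N_def by auto
    have "t x \<in> X" "t (t x) \<in> X" using tX x by auto
    moreover have "t (t x) \<noteq> t x" using Nprops[OF that] by blast
    moreover have "t (t (t x)) \<noteq> t (t x)" using Nprops[OF that] t3[OF x] by metis
    moreover have "t x \<noteq> x" using Nprops[OF that] by blast
    ultimately show ?thesis using that unfolding N_def F_def by auto
  qed
  have Ocard: "card (?O x) = 3" if "x \<in> N" for x using Nprops[OF that] by auto
  have Oshift: "?O (t x) = ?O x" if "x \<in> X" for x using t3[OF that] by auto
  have Ostep: "y \<in> ?O x \<Longrightarrow> ?O y = ?O x" if "x \<in> X" for x y
  proof -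
    assume "y \<in> ?O x"
    then consider "y = x" | "y = t x" | "y = t (t x)" by blast
    then show ?thesis
    proof cases
      case 1 then show ?thesis by simp
    next
      case 2 then show ?thesis using Oshift[OF that] by simp
    next
      case 3 then show ?thesis using Oshift[OF that] Oshift[OF tX[OF that]] by simp
    qed
  qed
  have disj: "\<forall>c1\<in>?O ` N. \<forall>c2\<in>?O ` N. c1 \<noteq> c2 \<longrightarrow> c1 \<inter> c2 = {}"
  proof (intro ballI impI)
    fix c1 c2 assume c1: "c1 \<in> ?O ` N" and c2: "c2 \<in> ?O ` N" and ne: "c1 \<noteq> c2"
    obtain x1 where x1: "x1 \<in> N" "c1 = ?O x1" using c1 by blast
    obtain x2 where x2: "x2 \<in> N" "c2 = ?O x2" using c2 by blast
    have X1: "x1 \<in> X" "x2 \<in> X" using x1 x2 unfolding N_def by auto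
    show "c1 \<inter> c2 = {}"
    proof (rule ccontr)
      assume "c1 \<inter> c2 \<noteq> {}"
      then obtain y where y1: "y \<in> ?O x1" and y2: "y \<in> ?O x2" using x1 x2 by blast
      have "?O y = ?O x1" using y1 by (rule Ostep[OF X1(1)])
      moreover have "?O y = ?O x2" using y2 by (rule Ostep[OF X1(2)])
      ultimately show False using ne x1 x2 by simp
    qed
  qed
  have UN: "\<Union> (?O ` N) = N" using ON_sub by auto
  have part: "3 * card (?O ` N) = card N"
    using card_partition[of "?O ` N" 3] finF(2) UN Ocard disj by auto
  have cF: "card (?O ` F) = card F"
  proof -
    have "?O ` F = (\<lambda>x. {x}) ` F" using OF by auto
    then show ?thesis by (simp add: card_image inj_on_def)
  qed
  have dis2: "?O ` F \<inter> ?O ` N = {}"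
  proof -
    have "?O x \<noteq> ?O y" if "x \<in> F" "y \<in> N" for x y
      using OF[OF that(1)] Ocard[OF that(2)] by auto
    then show ?thesis by blast
  qed
  have "?O ` X = ?O ` F \<union> ?O ` N" using XFN by auto
  then have "card (?O ` X) = card (?O ` F) + card (?O ` N)"
    using card_Un_disjoint[OF _ _ dis2] finF by simp
  moreover have "card X = card F + card N" unfolding XFN(1) by (rule card_Un_disjoint[OF finF XFN(2)])
  ultimately show ?thesis using part cF unfolding F_def by simp
qed

lemma count_mult_dvd:
  fixes D M :: int assumes D: "D > 0"
  shows "card {a. 0 \<le> a \<and> a < D \<and> D dvd M * a} = nat (gcd D M)"
proof -
  define g where "g = gcd D M"
  have g: "g > 0" unfolding g_def using D by simp
  define E where "E = D div g"
  define M' where "M' = M div g"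
  have DE: "D = g * E" unfolding E_def g_def by simp
  have MM: "M = g * M'" unfolding M'_def g_def by simp
  have E: "E > 0" using D g DE by (simp add: zero_less_mult_iff)
  have cop: "coprime E M'" unfolding E_def M'_def g_def by (rule div_gcd_coprime) (use D in simp)
  have iff: "D dvd M * a \<longleftrightarrow> E dvd a" for a
  proof -
    have "D dvd M * a \<longleftrightarrow> g * E dvd g * (M' * a)" unfolding DE MM by (simp add: mult.assoc)
    also have "\<dots> \<longleftrightarrow> E dvd M' * a" using g by simp
    also have "\<dots> \<longleftrightarrow> E dvd a" using cop by (simp add: coprime_dvd_mult_right_iff coprime_commute)
    finally show ?thesis .
  qed
  have set: "{a. 0 \<le> a \<and> a < D \<and> D dvd M * a} = (\<lambda>t. E * t) ` {0..<g}"
  proof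
    show "{a. 0 \<le> a \<and> a < D \<and> D dvd M * a} \<subseteq> (\<lambda>t. E * t) ` {0..<g}"
    proof
      fix a assume a: "a \<in> {a. 0 \<le> a \<and> a < D \<and> D dvd M * a}"
      then obtain t where t: "a = E * t" using iff by blast
      have "0 \<le> t" using a t E by (simp add: zero_le_mult_iff)
      moreover have "t < g" using a t E DE by (simp add: mult.commute)
      ultimately show "a \<in> (\<lambda>t. E * t) ` {0..<g}" using t by auto
    qed
  next
    show "(\<lambda>t. E * t) ` {0..<g} \<subseteq> {a. 0 \<le> a \<and> a < D \<and> D dvd M * a}"
    proof
      fix a assume "a \<in> (\<lambda>t. E * t) ` {0..<g}"
      then obtain t where t0: "t \<in> {0..<g}" and t1: "a = E * t" by (rule imageE)
      then have t: "a = E * t" "0 \<le> t" "t < g" by simp_all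
      have "0 \<le> a" using t E by simp
      moreover have "a < D" unfolding DE t(1) using t E by (simp add: mult.commute)
      moreover have "D dvd M * a" unfolding iff t(1) by simp
      ultimately show "a \<in> {a. 0 \<le> a \<and> a < D \<and> D dvd M * a}" by simp
    qed
  qed
  have "inj_on (\<lambda>t. E * t) {0..<g}" using E by (simp add: inj_on_def)
  then show ?thesis unfolding set g_def[symmetric] by (simp add: card_image)
qed


locale gsetup =
  fixes d q :: nat and \<xi> :: complex
  assumes qd: "q < d" and cop: "gcd d q = 1" and dv: "d dvd q^3+1"
    and prim: "primitive_root_of_unity d \<xi>"
begin

abbreviation "L \<equiv> Lset d q"
abbreviation "G \<equiv> Gset \<xi> d q"

lemma nz: "\<xi> \<noteq> 0" using prim_nz[OF prim] .
lemma dpos: "d > 0" using qd by simp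

lemma copi: "coprime (int d) (int q)"
  using cop by (simp add: coprime_iff_gcd_eq_1 gcd_int_int_eq)

lemma dvi: "int d dvd int q ^ 3 + 1"
  using dv by (metis int_dvd_int_iff of_nat_1 of_nat_add of_nat_power)

lemma L_add: "x \<in> L \<Longrightarrow> y \<in> L \<Longrightarrow> (\<lambda>i. x i + y i) \<in> L"
  unfolding Lset_def
proof -
  assume "x \<in> {x. int d dvd int q ^ 2 * x 1 - int q * x 2 + x 3}" "y \<in> {x. int d dvd int q ^ 2 * x 1 - int q * x 2 + x 3}"
  then have "int d dvd (int q ^ 2 * x 1 - int q * x 2 + x 3) + (int q ^ 2 * y 1 - int q * y 2 + y 3)" by simp
  then show "(\<lambda>i. x i + y i) \<in> {x. int d dvd int q ^ 2 * x 1 - int q * x 2 + x 3}"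
    by (simp add: algebra_simps)
qed

lemma L_smult: "x \<in> L \<Longrightarrow> (\<lambda>i. c * x i) \<in> L"
  unfolding Lset_def
proof -
  assume "x \<in> {x. int d dvd int q ^ 2 * x 1 - int q * x 2 + x 3}"
  then have "int d dvd c * (int q ^ 2 * x 1 - int q * x 2 + x 3)" by simp
  then show "(\<lambda>i. c * x i) \<in> {x. int d dvd int q ^ 2 * x 1 - int q * x 2 + x 3}"
    by (simp add: algebra_simps)
qed

lemma L_neg: "x \<in> L \<Longrightarrow> (\<lambda>i. - x i) \<in> L"
  using L_smult[of x "-1"] by simp

lemma L_zero: "(\<lambda>i. 0) \<in> L" unfolding Lset_def by simp

lemma L_sh1: assumes "x \<in> L" shows "(\<lambda>i. x (i + 1)) \<in> L"
proof -
  let ?Q = "int q"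
  have a: "int d dvd ?Q ^ 2 * x 1 - ?Q * x 2 + x 3" using assms unfolding Lset_def by simp
  have e: "?Q * (?Q ^ 2 * x 2 - ?Q * x 3 + x 1) = ?Q * (?Q ^ 3 + 1) * x 1 - ?Q ^ 2 * (?Q ^ 2 * x 1 - ?Q * x 2 + x 3)"
    by (simp add: algebra_simps power2_eq_square power3_eq_cube)
  have "int d dvd ?Q * (?Q ^ 3 + 1) * x 1 - ?Q ^ 2 * (?Q ^ 2 * x 1 - ?Q * x 2 + x 3)"
    using a dvi by (simp add: dvd_diff)
  then have "int d dvd ?Q * (?Q ^ 2 * x 2 - ?Q * x 3 + x 1)" using e by simp
  then have "int d dvd (?Q ^ 2 * x 2 - ?Q * x 3 + x 1)"
    using copi by (simp add: coprime_dvd_mult_right_iff)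
  then show ?thesis unfolding Lset_def by simp
qed

lemma L_sh: assumes "x \<in> L" shows "(\<lambda>i. x (i + j)) \<in> L"
proof -
  have "(\<lambda>i. x (i + 1 + 1)) \<in> L" using L_sh1[OF L_sh1[OF assms]] by simp
  then have 2: "(\<lambda>i. x (i + 2)) \<in> L" by (simp add: add.assoc)
  show ?thesis using ex3[of j] assms L_sh1[OF assms] 2 by auto
qed

lemma Mx_conj: "Mx \<xi> y j ** Mx \<xi> x k ** matrix_inv (Mx \<xi> y j) = Mx \<xi> (\<lambda>i. y i + x (i + j) - y (i + k)) k"
  by (simp add: Mx_mult[OF nz] Mx_inv[OF nz] algebra_simps)


abbreviation "GG \<equiv> gen_mat_group {diagA \<xi> q, permB}"

lemma v_in_L: "vec3 0 1 (int q) \<in> L" unfolding Lset_def by simp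

lemma gen_sub: "GG \<subseteq> G"
proof
  fix M assume "M \<in> GG"
  then show "M \<in> G"
  proof induction
    case one
    then show ?case unfolding Gset_def using Mx_one[of \<xi>, symmetric] L_zero by blast
  next
    case (gen A)
    then show ?case unfolding Gset_def using diagA_Mx[of \<xi> q] permB_Mx[of \<xi>] v_in_L L_zero by blast
  next
    case (mult A C)
    then obtain x k y l where "A = Mx \<xi> x k" "C = Mx \<xi> y l" "x \<in> L" "y \<in> L" unfolding Gset_def by blast
    then show ?case unfolding Gset_def using Mx_mult[OF nz, of x k y l] L_add[OF \<open>x \<in> L\<close> L_sh[OF \<open>y \<in> L\<close>, of k]] by blast
  next
    case (inv A)
    then obtain x k where "A = Mx \<xi> x k" "x \<in> L" unfolding Gset_def by blast
    moreover have "(\<lambda>i. - x (i - k)) = (\<lambda>i. - x (i + (-k)))" by simp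
    ultimately show ?case unfolding Gset_def using Mx_inv[OF nz, of x k] L_neg[OF L_sh[OF \<open>x \<in> L\<close>, of "-k"]] by auto
  qed
qed

lemma P_add: "Mx \<xi> y 0 \<in> GG \<Longrightarrow> Mx \<xi> z 0 \<in> GG \<Longrightarrow> Mx \<xi> (\<lambda>i. y i + z i) 0 \<in> GG"
  using gen_mat_group.mult[of "Mx \<xi> y 0" _ "Mx \<xi> z 0"] by (simp add: Mx_mult[OF nz])

lemma P_neg: "Mx \<xi> y 0 \<in> GG \<Longrightarrow> Mx \<xi> (\<lambda>i. - y i) 0 \<in> GG"
  using gen_mat_group.inv[of "Mx \<xi> y 0"] by (simp add: Mx_inv[OF nz])

lemma B_in: "Mx \<xi> (\<lambda>i. 0) 1 \<in> GG"
  using gen_mat_group.gen[of permB] permB_Mx[of \<xi>] by simp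

lemma P_sh1: "Mx \<xi> y 0 \<in> GG \<Longrightarrow> Mx \<xi> (\<lambda>i. y (i + 1)) 0 \<in> GG"
  using gen_mat_group.mult[OF gen_mat_group.mult[OF B_in], of "Mx \<xi> y 0" "matrix_inv (Mx \<xi> (\<lambda>i. 0) 1)"]
    gen_mat_group.inv[OF B_in] Mx_conj[of "\<lambda>i. 0" 1 y 0] by simp

lemma P_zero: "Mx \<xi> (\<lambda>i. 0) 0 \<in> GG"
  using gen_mat_group.one Mx_one by metis

lemma P_nat: "Mx \<xi> y 0 \<in> GG \<Longrightarrow> Mx \<xi> (\<lambda>i. int n * y i) 0 \<in> GG"
proof (induction n)
  case 0 then show ?case using P_zero by simp
next
  case (Suc n)
  then show ?case using P_add[of "\<lambda>i. int n * y i" y] by (simp add: algebra_simps)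
qed

lemma P_int: assumes "Mx \<xi> y 0 \<in> GG" shows "Mx \<xi> (\<lambda>i. c * y i) 0 \<in> GG"
proof (cases c rule: int_cases)
  case (nonneg n) then show ?thesis using P_nat[OF assms] by simp
next
  case (neg n)
  then have c: "c = - int (Suc n)" by simp
  have "(\<lambda>i. c * y i) = (\<lambda>i. - (int (Suc n) * y i))" unfolding c by (rule ext) (simp add: algebra_simps)
  then show ?thesis using P_neg[OF P_nat[OF assms, of "Suc n"]] by simp
qed

lemma sub_gen: "G \<subseteq> GG"
proof
  fix M assume "M \<in> G"
  then obtain x k where M: "M = Mx \<xi> x k" and x: "x \<in> L" unfolding Gset_def by blast
  let ?Q = "int q"
  let ?v = "vec3 0 1 ?Q"
  have Pv: "Mx \<xi> ?v 0 \<in> GG" using gen_mat_group.gen[of "diagA \<xi> q"] diagA_Mx[of \<xi> q] by simp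
  have Ptv: "Mx \<xi> (\<lambda>i. ?v (i+1)) 0 \<in> GG" using P_sh1[OF Pv] .
  let ?u = "\<lambda>i. ?v (i+1) + (- ?Q) * ?v i"
  have Pu: "Mx \<xi> ?u 0 \<in> GG" using P_add[OF Ptv P_int[OF Pv, of "-?Q"]] .
  let ?y = "\<lambda>i. x 1 * ?u i + x 2 * ?v i"
  have Py: "Mx \<xi> ?y 0 \<in> GG" using P_add[OF P_int[OF Pu] P_int[OF Pv]] .
  have cc: "int d dvd ?Q ^ 2 * x 1 - ?Q * x 2 + x 3" using x unfolding Lset_def by simp
  have "int d dvd (?y i - x i)" for i
  proof -
    have e0: "?y 0 - x 0 = - (?Q ^ 2 * x 1 - ?Q * x 2 + x 3)"
      by (simp add: algebra_simps power2_eq_square)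
    have e1: "?y 1 - x 1 = 0" by simp
    have e2: "?y 2 - x 2 = 0" by simp
    consider "i = 0" | "i = 1" | "i = 2" using ex3[of i] by auto
    then show ?thesis
    proof cases
      case 1 then show ?thesis using e0 cc by (metis dvd_minus_iff)
    next
      case 2 then show ?thesis using e1 by (metis dvd_0_right)
    next
      case 3 then show ?thesis using e2 by (metis dvd_0_right)
    qed
  qed
  then have Px: "Mx \<xi> x 0 \<in> GG" using Mx_congr[OF prim, of ?y x 0] Py by simp
  have Bk: "Mx \<xi> (\<lambda>i. 0) k \<in> GG"
  proof -
    have "k = 0 \<or> k = 1 \<or> k = 2" using ex3 .
    moreover have "Mx \<xi> (\<lambda>i. 0) 2 \<in> GG"
      using gen_mat_group.mult[OF B_in B_in] by (simp add: Mx_mult[OF nz])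
    ultimately show ?thesis using B_in P_zero by auto
  qed
  show "M \<in> GG" using gen_mat_group.mult[OF Px Bk] M by (simp add: Mx_mult[OF nz])
qed

lemma GG_eq: "GG = G" using gen_sub sub_gen by blast


definition "gg = gcd (int d) (int q ^ 2 - int q + 1)"
definition "psi x = (1 - int q) * x 1 + x 2"

lemma gg_dvd_d: "gg dvd int d" unfolding gg_def by simp
lemma gg_dvd_m: "gg dvd (int q ^ 2 - int q + 1)" unfolding gg_def by simp
lemma gg_pos: "gg > 0" unfolding gg_def using dpos by simp

lemma L_cc: "x \<in> L \<Longrightarrow> int d dvd int q ^ 2 * x 1 - int q * x 2 + x 0"
  unfolding Lset_def by simp

lemma psi_sh1: assumes "z \<in> L" shows "gg dvd psi z - psi (\<lambda>i. z (i + 1))"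
proof -
  have e: "psi z - psi (\<lambda>i. z (i + 1)) = (int q ^ 2 - int q + 1) * z 1 - (int q ^ 2 * z 1 - int q * z 2 + z 0)"
    unfolding psi_def by (simp add: algebra_simps power2_eq_square)
  have "gg dvd (int q ^ 2 - int q + 1) * z 1" using gg_dvd_m by simp
  moreover have "gg dvd (int q ^ 2 * z 1 - int q * z 2 + z 0)"
    using dvd_trans[OF gg_dvd_d L_cc[OF assms]] .
  ultimately show ?thesis unfolding e by (rule dvd_diff)
qed

lemma psi_sh: assumes "z \<in> L" shows "gg dvd psi z - psi (\<lambda>i. z (i + j))"
proof -
  have a: "gg dvd psi z - psi (\<lambda>i. z (i + 1))" using psi_sh1[OF assms] .
  have b: "gg dvd psi (\<lambda>i. z (i + 1)) - psi (\<lambda>i. z (i + 1 + 1))" using psi_sh1[OF L_sh1[OF assms]] by simp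
  have c: "gg dvd psi z - psi (\<lambda>i. z (i + 2))"
    using dvd_add[OF a b] by (simp add: add.assoc)
  consider "j = 0" | "j = 1" | "j = 2" using ex3[of j] by auto
  then show ?thesis by cases (use a c in auto)
qed

lemma class_formula:
  "conj_class G (Mx \<xi> x k) = {Mx \<xi> (\<lambda>i. y i + x (i + j) - y (i + k)) k | y j. y \<in> L}"
proof (rule set_eqI, rule iffI)
  fix N assume "N \<in> conj_class G (Mx \<xi> x k)"
  then obtain y j where "N = Mx \<xi> y j ** Mx \<xi> x k ** matrix_inv (Mx \<xi> y j)" "y \<in> L"
    unfolding conj_class_def Gset_def by blast
  then show "N \<in> {Mx \<xi> (\<lambda>i. y i + x (i + j) - y (i + k)) k | y j. y \<in> L}"
    using Mx_conj by blast
next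
  fix N assume "N \<in> {Mx \<xi> (\<lambda>i. y i + x (i + j) - y (i + k)) k | y j. y \<in> L}"
  then obtain y j where "N = Mx \<xi> (\<lambda>i. y i + x (i + j) - y (i + k)) k" "y \<in> L"
    by blast
  then have "N = Mx \<xi> y j ** Mx \<xi> x k ** matrix_inv (Mx \<xi> y j)" "y \<in> L"
    using Mx_conj by simp_all
  then show "N \<in> conj_class G (Mx \<xi> x k)"
    unfolding conj_class_def Gset_def by blast
qed

lemma solve1: assumes w: "w \<in> L" and g: "gg dvd psi w"
  shows "\<exists>y\<in>L. \<forall>i. int d dvd (y i - y (i + 1)) - w i"
proof -
  let ?Q = "int q" let ?m = "int q ^ 2 - int q + 1"
  obtain r where r: "psi w = gg * r" using g by blast
  obtain u v where uv: "u * ?m + v * int d = gcd ?m (int d)" using bezout_int by blast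
  have uv': "u * ?m + v * int d = gg" using uv unfolding gg_def by (simp add: gcd.commute)
  define a where "a = u * r"
  define b where "b = a - w 1"
  define y where "y = vec3 a b (?Q * b - ?Q ^ 2 * a)"
  have yL: "y \<in> L" unfolding y_def Lset_def by simp
  let ?z = "\<lambda>i. y i - y (i + 1)"
  have zL: "?z \<in> L" using L_add[OF yL L_neg[OF L_sh1[OF yL]]] by simp
  have d1: "int d dvd ?z 1 - w 1" unfolding y_def b_def by simp
  have "?z 2 - w 2 = ?m * a - psi w"
    unfolding y_def b_def psi_def by (simp add: algebra_simps power2_eq_square)
  also have "\<dots> = - (v * r) * int d" unfolding a_def r uv'[symmetric] by (simp add: algebra_simps)
  finally have d2: "int d dvd ?z 2 - w 2" by simp
  have d0: "int d dvd ?z 0 - w 0"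
  proof -
    have eq: "?z 0 - w 0 = (?Q ^ 2 * ?z 1 - ?Q * ?z 2 + ?z 0) - (?Q ^ 2 * w 1 - ?Q * w 2 + w 0)
        - ?Q ^ 2 * (?z 1 - w 1) + ?Q * (?z 2 - w 2)" by (simp add: algebra_simps)
    show ?thesis
      apply (subst eq)
      by (rule dvd_add[OF dvd_diff[OF dvd_diff[OF L_cc[OF zL] L_cc[OF w]] dvd_mult[OF d1]] dvd_mult[OF d2]])
  qed
  have "int d dvd ?z i - w i" for i
  proof -
    consider "i = 0" | "i = 1" | "i = 2" using ex3[of i] by auto
    then show ?thesis by cases (use d0 d1 d2 in simp_all)
  qed
  then show ?thesis using yL by blast
qed


lemma psi_lin: "psi (\<lambda>i. a i + b i - c i) = psi a + psi b - psi c"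
  unfolding psi_def by (simp add: algebra_simps)

lemma psi_congr: assumes "\<And>i. int d dvd a i - b i" shows "gg dvd psi a - psi b"
proof -
  have "psi a - psi b = (1 - int q) * (a 1 - b 1) + (a 2 - b 2)" unfolding psi_def by (simp add: algebra_simps)
  moreover have "int d dvd (1 - int q) * (a 1 - b 1) + (a 2 - b 2)"
    using assms[of 1] assms[of 2] by (simp add: dvd_add)
  ultimately show ?thesis using dvd_trans[OF gg_dvd_d] by metis
qed

lemma dvd_shift: fixes a b c D :: int
  assumes "D dvd b - c" shows "D dvd a - b \<longleftrightarrow> D dvd a - c"
proof -
  have "a - c = (b - c) + (a - b)" by simp
  then show ?thesis using dvd_add_right_iff[OF assms, of "a - b"] by simp
qed

lemma class12: assumes x: "x \<in> L" and k: "k \<noteq> 0"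
  shows "conj_class G (Mx \<xi> x k) = {Mx \<xi> x' k | x'. x' \<in> L \<and> gg dvd psi x' - psi x}"
proof (rule set_eqI, rule iffI)
  fix N assume "N \<in> conj_class G (Mx \<xi> x k)"
  then obtain y j where N: "N = Mx \<xi> (\<lambda>i. y i + x (i + j) - y (i + k)) k" and y: "y \<in> L"
    unfolding class_formula by blast
  let ?x = "\<lambda>i. y i + x (i + j) - y (i + k)"
  have "(\<lambda>i. y i + x (i + j) + - y (i + k)) \<in> L"
    by (intro L_add L_neg L_sh x y)
  then have xL: "?x \<in> L" by simp
  have e: "psi ?x - psi x = (psi y - psi (\<lambda>i. y (i + k))) - (psi x - psi (\<lambda>i. x (i + j)))"
    using psi_lin[of y "\<lambda>i. x (i + j)" "\<lambda>i. y (i + k)"] by simp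
  have "gg dvd psi ?x - psi x"
    apply (subst e)
    using psi_sh[OF y, of k] psi_sh[OF x, of j] by (rule dvd_diff)
  then show "N \<in> {Mx \<xi> x' k | x'. x' \<in> L \<and> gg dvd psi x' - psi x}" using N xL by blast
next
  fix N assume "N \<in> {Mx \<xi> x' k | x'. x' \<in> L \<and> gg dvd psi x' - psi x}"
  then obtain x' where N: "N = Mx \<xi> x' k" and x': "x' \<in> L" and g: "gg dvd psi x' - psi x" by blast
  let ?w = "\<lambda>i. x' i + - x i"
  have wL: "?w \<in> L" using L_add[OF x' L_neg[OF x]] .
  have pw: "psi ?w = psi x' - psi x" unfolding psi_def by (simp add: algebra_simps)
  obtain y where yL: "y \<in> L" and yd: "\<And>i. int d dvd (y i - y (i + 1)) - ?w i"
    using solve1[OF wL] g pw by auto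
  have "\<exists>y'\<in>L. \<forall>i. int d dvd (y' i - y' (i + k)) - ?w i"
  proof -
    consider "k = 1" | "k = 2" using ex3[of k] k by auto
    then show ?thesis
    proof cases
      case 1 show ?thesis unfolding 1 by (rule bexI[where x = y]) (use yd yL in auto)
    next
      case 2
      let ?y = "\<lambda>i. y i + y (i + 2)"
      have yL2: "?y \<in> L" using L_add[OF yL L_sh[OF yL]] .
      have eq: "?y i - ?y (i + 2) = y i - y (i + 1)" for i by (simp add: add.assoc)
      have yd2: "\<forall>i. int d dvd (?y i - ?y (i + k)) - ?w i" unfolding 2 eq using yd by blast
      show ?thesis
        by (rule bexI[where x = ?y], rule yd2, rule yL2)
    qed
  qed
  then obtain y' where y'L: "y' \<in> L" and y'd: "\<And>i. int d dvd (y' i - y' (i + k)) - ?w i" by blast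
  have "Mx \<xi> x' k = Mx \<xi> (\<lambda>i. y' i + x (i + 0) - y' (i + k)) k"
  proof (rule Mx_congr[OF prim])
    fix i
    have "x' i - (y' i + x (i + 0) - y' (i + k)) = - ((y' i - y' (i + k)) - ?w i)" by simp
    then show "int d dvd x' i - (y' i + x (i + 0) - y' (i + k))" using y'd[of i] by (metis dvd_minus_iff)
  qed
  then show "N \<in> conj_class G (Mx \<xi> x k)" unfolding class_formula N using y'L by blast
qed


lemma dvd_small_eq: fixes a b D :: int
  assumes "0 \<le> a" "a < D" "0 \<le> b" "b < D" "D dvd a - b" shows "a = b"
proof -
  have "a mod D = b mod D" using assms(5) by (simp add: mod_eq_dvd_iff)
  then show ?thesis using assms by simp
qed

definition "vr r = vec3 0 r (int q * r)"
lemma vrL: "vr r \<in> L" unfolding vr_def Lset_def by simp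
lemma psi_vr: "psi (vr r) = r" unfolding vr_def psi_def by simp

lemma card12: assumes k: "k \<noteq> 0"
  shows "card (conj_class G ` ((\<lambda>x. Mx \<xi> x k) ` L)) = nat gg"
proof -
  let ?cls = "\<lambda>r. conj_class G (Mx \<xi> (vr r) k)"
  have img: "?cls ` {0..<gg} = conj_class G ` ((\<lambda>x. Mx \<xi> x k) ` L)"
  proof
    show "?cls ` {0..<gg} \<subseteq> conj_class G ` ((\<lambda>x. Mx \<xi> x k) ` L)" using vrL by blast
  next
    show "conj_class G ` ((\<lambda>x. Mx \<xi> x k) ` L) \<subseteq> ?cls ` {0..<gg}"
    proof
      fix C assume "C \<in> conj_class G ` ((\<lambda>x. Mx \<xi> x k) ` L)"
      then obtain x where x: "x \<in> L" and C: "C = conj_class G (Mx \<xi> x k)" by blast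
      let ?r = "psi x mod gg"
      have r: "?r \<in> {0..<gg}" using gg_pos by simp
      have dr: "gg dvd psi x - psi (vr ?r)" unfolding psi_vr by (simp add: minus_mod_eq_mult_div)
      have "C = ?cls ?r" unfolding C class12[OF x k] class12[OF vrL k]
        using dvd_shift[OF dr] by simp
      then show "C \<in> ?cls ` {0..<gg}" using r by blast
    qed
  qed
  have inj: "inj_on ?cls {0..<gg}"
  proof
    fix r r' assume r: "r \<in> {0..<gg}" and r': "r' \<in> {0..<gg}" and e: "?cls r = ?cls r'"
    have "Mx \<xi> (vr r) k \<in> ?cls r" unfolding class12[OF vrL k] using vrL by auto
    then have "Mx \<xi> (vr r) k \<in> ?cls r'" using e by simp
    then obtain x' where x': "Mx \<xi> (vr r) k = Mx \<xi> x' k" and g: "gg dvd psi x' - r'"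
      unfolding class12[OF vrL k] psi_vr by blast
    have "gg dvd psi (vr r) - psi x'" using Mx_eqD[OF prim x'] psi_congr by blast
    then have "gg dvd r - r'" using g dvd_add[of gg "r - psi x'" "psi x' - r'"] unfolding psi_vr by simp
    then show "r = r'" using r r' dvd_small_eq[of r gg r'] by simp
  qed
  show ?thesis using card_image[OF inj] img by simp
qed

end

context gsetup begin

definition "L0 = {x\<in>L. \<forall>i. 0 \<le> x i \<and> x i < int d}"

lemma L_nrm: assumes "x \<in> L" shows "(\<lambda>i. x i mod int d) \<in> L0"
proof -
  let ?n = "\<lambda>i. x i mod int d"
  let ?c = "\<lambda>i. x i div int d"
  have "(\<lambda>i. x i + (- int d) * ?c i) \<in> L"
  proof (rule L_add[OF assms])
    have "(\<lambda>i. ?c i * int d) \<in> L" unfolding Lset_def by (simp add: algebra_simps flip: distrib_right)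
    then show "(\<lambda>i. - int d * ?c i) \<in> L" using L_neg by (simp add: mult.commute)
  qed
  moreover have "(\<lambda>i. x i + (- int d) * ?c i) = ?n"
    by (rule ext) (simp add: minus_div_mult_eq_mod[symmetric] algebra_simps)
  ultimately have "?n \<in> L" by simp
  then show ?thesis unfolding L0_def using dpos by simp
qed

lemma Mx_nrm: "Mx \<xi> (\<lambda>i. x i mod int d) k = Mx \<xi> x k"
  by (rule Mx_congr[OF prim]) (simp add: mod_eq_dvd_iff[symmetric])

lemma img_L0: "(\<lambda>x. Mx \<xi> x k) ` L = (\<lambda>x. Mx \<xi> x k) ` L0"
proof
  show "(\<lambda>x. Mx \<xi> x k) ` L \<subseteq> (\<lambda>x. Mx \<xi> x k) ` L0"
  proof
    fix M assume "M \<in> (\<lambda>x. Mx \<xi> x k) ` L"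
    then obtain x where "x \<in> L" "M = Mx \<xi> x k" by blast
    then show "M \<in> (\<lambda>x. Mx \<xi> x k) ` L0" using L_nrm Mx_nrm by (metis image_eqI)
  qed
  show "(\<lambda>x. Mx \<xi> x k) ` L0 \<subseteq> (\<lambda>x. Mx \<xi> x k) ` L" unfolding L0_def by blast
qed

lemma inj_L0: "inj_on (\<lambda>x. Mx \<xi> x k) L0"
proof
  fix x y assume x: "x \<in> L0" and y: "y \<in> L0" and e: "Mx \<xi> x k = Mx \<xi> y k"
  have "x i = y i" for i
    using Mx_eqD[OF prim e] x y unfolding L0_def by (intro dvd_small_eq[of "x i" "int d" "y i"]) auto
  then show "x = y" by auto
qed

lemma forall3': "(\<forall>i::3. P i) \<longleftrightarrow> P 0 \<and> P 1 \<and> P 2" using ex3 by metis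

lemma L0_param: "L0 = (\<lambda>(a, b). vec3 a b ((int q * b - int q ^ 2 * a) mod int d)) ` ({0..<int d} \<times> {0..<int d})"
proof
  show "L0 \<subseteq> (\<lambda>(a, b). vec3 a b ((int q * b - int q ^ 2 * a) mod int d)) ` ({0..<int d} \<times> {0..<int d})"
  proof
    fix x assume x: "x \<in> L0"
    have r: "0 \<le> x i \<and> x i < int d" for i using x unfolding L0_def by auto
    have cc: "int d dvd int q ^ 2 * x 1 - int q * x 2 + x 0" using x L_cc unfolding L0_def by auto
    have "x 0 = (int q * x 2 - int q ^ 2 * x 1) mod int d"
    proof -
      have "x 0 mod int d = (int q * x 2 - int q ^ 2 * x 1) mod int d"
        unfolding mod_eq_dvd_iff using cc by (simp add: algebra_simps)
      then show ?thesis using r[of 0] by simp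
    qed
    then have "x = vec3 (x 1) (x 2) ((int q * x 2 - int q ^ 2 * x 1) mod int d)"
      unfolding fun_eq_iff forall3' by simp
    then show "x \<in> (\<lambda>(a, b). vec3 a b ((int q * b - int q ^ 2 * a) mod int d)) ` ({0..<int d} \<times> {0..<int d})"
      using r[of 1] r[of 2] by (intro image_eqI[where x = "(x 1, x 2)"]) auto
  qed
  show "(\<lambda>(a, b). vec3 a b ((int q * b - int q ^ 2 * a) mod int d)) ` ({0..<int d} \<times> {0..<int d}) \<subseteq> L0"
  proof
    fix x assume "x \<in> (\<lambda>(a, b). vec3 a b ((int q * b - int q ^ 2 * a) mod int d)) ` ({0..<int d} \<times> {0..<int d})"
    then obtain p where p: "p \<in> {0..<int d} \<times> {0..<int d}"
      and x0: "x = (\<lambda>(a, b). vec3 a b ((int q * b - int q ^ 2 * a) mod int d)) p" by (rule imageE)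
    obtain a b where pab: "p = (a, b)" by (cases p)
    have ab: "0 \<le> a" "a < int d" "0 \<le> b" "b < int d" using p unfolding pab by auto
    have x: "x = vec3 a b ((int q * b - int q ^ 2 * a) mod int d)" using x0 unfolding pab by simp
    let ?c = "int q * b - int q ^ 2 * a"
    have e: "int q ^ 2 * a - int q * b + ?c mod int d = ?c mod int d - ?c" by simp
    have dv: "int d dvd ?c mod int d - ?c"
      by (simp only: mod_eq_dvd_iff[symmetric] mod_mod_trivial)
    have "int d dvd int q ^ 2 * a - int q * b + ?c mod int d" by (subst e) (rule dv)
    then have "x \<in> L" unfolding Lset_def x by simp
    moreover have "\<forall>i. 0 \<le> x i \<and> x i < int d"
      unfolding forall3' x using ab dpos by simp
    ultimately show "x \<in> L0" unfolding L0_def by simp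
  qed
qed

lemma fin_L0: "finite L0" unfolding L0_param by simp

lemma card_L0: "card L0 = d ^ 2"
proof -
  let ?f = "\<lambda>(a, b). vec3 a b ((int q * b - int q ^ 2 * a) mod int d)"
  have "inj_on ?f ({0..<int d} \<times> {0..<int d})"
  proof (rule inj_onI)
    fix p p' assume "?f p = ?f p'"
    then have "?f p 1 = ?f p' 1" "?f p 2 = ?f p' 2" by simp_all
    then show "p = p'" by (cases p; cases p') simp
  qed
  then have "card L0 = card ({0..<int d} \<times> {0..<int d})" unfolding L0_param by (rule card_image)
  also have "\<dots> = d ^ 2" by (simp add: card_cartesian_product power2_eq_square)
  finally show "card L0 = d ^ 2" .
qed


definition "tm M = Mx \<xi> (\<lambda>i. 0) 1 ** M ** matrix_inv (Mx \<xi> (\<lambda>i. 0) 1)"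

lemma tm_Mx: "tm (Mx \<xi> x 0) = Mx \<xi> (\<lambda>i. x (i + 1)) 0"
  unfolding tm_def Mx_conj by simp

lemma class0: assumes x: "x \<in> L"
  shows "conj_class G (Mx \<xi> x 0) = {Mx \<xi> x 0, tm (Mx \<xi> x 0), tm (tm (Mx \<xi> x 0))}"
proof -
  have r: "{Mx \<xi> x 0, tm (Mx \<xi> x 0), tm (tm (Mx \<xi> x 0))} = {Mx \<xi> x 0, Mx \<xi> (\<lambda>i. x (i + 1)) 0, Mx \<xi> (\<lambda>i. x (i + 2)) 0}"
    by (simp add: tm_Mx add.assoc)
  show ?thesis unfolding r
  proof (rule set_eqI, rule iffI)
    fix N assume "N \<in> conj_class G (Mx \<xi> x 0)"
    then obtain y j where N: "N = Mx \<xi> (\<lambda>i. y i + x (i + j) - y (i + 0)) 0" unfolding class_formula by blast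
    then have N': "N = Mx \<xi> (\<lambda>i. x (i + j)) 0" by simp
    consider "j = 0" | "j = 1" | "j = 2" using ex3[of j] by auto
    then show "N \<in> {Mx \<xi> x 0, Mx \<xi> (\<lambda>i. x (i + 1)) 0, Mx \<xi> (\<lambda>i. x (i + 2)) 0}"
      by cases (simp_all add: N')
  next
    fix N assume N: "N \<in> {Mx \<xi> x 0, Mx \<xi> (\<lambda>i. x (i + 1)) 0, Mx \<xi> (\<lambda>i. x (i + 2)) 0}"
    have e: "Mx \<xi> (\<lambda>i. x (i + j)) 0 \<in> conj_class G (Mx \<xi> x 0)" for j
    proof -
      have "Mx \<xi> (\<lambda>i. x (i + j)) 0 = Mx \<xi> (\<lambda>i. (\<lambda>i. 0) i + x (i + j) - (\<lambda>i. 0) (i + 0)) 0" by simp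
      then show ?thesis unfolding class_formula
        apply (intro CollectI exI[where x = "\<lambda>i. 0"] exI[where x = j])
        using L_zero by simp
    qed
    show "N \<in> conj_class G (Mx \<xi> x 0)" using N e[of 0] e[of 1] e[of 2] by auto
  qed
qed

lemma sh_L0: "(x::3\<Rightarrow>int) \<in> L0 \<Longrightarrow> (\<lambda>i. x (i + 1)) \<in> L0"
  unfolding L0_def using L_sh1 by auto

lemma card0: "3 * card (conj_class G ` ((\<lambda>x. Mx \<xi> x 0) ` L0)) = d ^ 2 + 2 * nat gg"
proof -
  let ?S = "(\<lambda>x. Mx \<xi> x 0) ` L0"
  have cls: "conj_class G ` ?S = (\<lambda>M. {M, tm M, tm (tm M)}) ` ?S"
    using class0 unfolding L0_def by (auto simp: image_image)
  have fin: "finite ?S" using fin_L0 by simp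
  have tS: "tm M \<in> ?S" if "M \<in> ?S" for M
    using that tm_Mx sh_L0 by auto
  have t3: "tm (tm (tm M)) = M" if "M \<in> ?S" for M
    using that by (auto simp: tm_Mx add.assoc)
  have cS: "card ?S = d ^ 2" using card_image[OF inj_L0] card_L0 by simp
  define Fx where "Fx = {x\<in>L0. (\<lambda>i. x (i + 1)) = x}"
  have fixset: "{M\<in>?S. tm M = M} = (\<lambda>x. Mx \<xi> x 0) ` Fx"
  proof
    show "{M\<in>?S. tm M = M} \<subseteq> (\<lambda>x. Mx \<xi> x 0) ` Fx"
    proof
      fix M assume "M \<in> {M\<in>?S. tm M = M}"
      then obtain x where x: "x \<in> L0" "M = Mx \<xi> x 0" "tm M = M" by blast
      then have "Mx \<xi> (\<lambda>i. x (i + 1)) 0 = Mx \<xi> x 0" using tm_Mx by simp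
      then have "(\<lambda>i. x (i + 1)) = x" using inj_L0[of 0] sh_L0[OF x(1)] x(1) unfolding inj_on_def by blast
      then show "M \<in> (\<lambda>x. Mx \<xi> x 0) ` Fx" unfolding Fx_def using x by blast
    qed
    show "(\<lambda>x. Mx \<xi> x 0) ` Fx \<subseteq> {M\<in>?S. tm M = M}"
      unfolding Fx_def using tm_Mx by auto
  qed
  have cfix1: "card {M\<in>?S. tm M = M} = card Fx"
    unfolding fixset by (rule card_image, rule inj_on_subset[OF inj_L0]) (auto simp: Fx_def)
  let ?m = "int q ^ 2 - int q + 1"
  have Fx_eq: "Fx = (\<lambda>a. \<lambda>i. a) ` {a. 0 \<le> a \<and> a < int d \<and> int d dvd ?m * a}"
  proof
    show "Fx \<subseteq> (\<lambda>a. \<lambda>i. a) ` {a. 0 \<le> a \<and> a < int d \<and> int d dvd ?m * a}"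
    proof
      fix x assume x: "x \<in> Fx"
      then have f: "(\<lambda>i. x (i + 1)) = x" "x \<in> L0" unfolding Fx_def by auto
      have "x (0 + 1) = x 0" "x (1 + 1) = x 1" using f(1) by (metis)+
      then have c: "x 1 = x 0" "x 2 = x 0" by simp_all
      then have xc: "x = (\<lambda>i. x 0)" unfolding fun_eq_iff forall3' by simp
      have "int d dvd int q ^ 2 * x 1 - int q * x 2 + x 0" using L_cc f(2) unfolding L0_def by auto
      then have "int d dvd ?m * x 0" unfolding c by (simp add: algebra_simps)
      moreover have "0 \<le> x 0 \<and> x 0 < int d" using f(2) unfolding L0_def by auto
      ultimately show "x \<in> (\<lambda>a. \<lambda>i. a) ` {a. 0 \<le> a \<and> a < int d \<and> int d dvd ?m * a}"
        using xc by (intro image_eqI[where x = "x 0"]) auto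
    qed
    show "(\<lambda>a. \<lambda>i. a) ` {a. 0 \<le> a \<and> a < int d \<and> int d dvd ?m * a} \<subseteq> Fx"
    proof
      fix x :: "3 \<Rightarrow> int" assume "x \<in> (\<lambda>a. \<lambda>i. a) ` {a. 0 \<le> a \<and> a < int d \<and> int d dvd ?m * a}"
      then obtain a where a: "0 \<le> a" "a < int d" "int d dvd ?m * a" and x: "x = (\<lambda>i. a)" by blast
      have "int d dvd int q ^ 2 * a - int q * a + a" using a(3) by (simp add: algebra_simps)
      then have "x \<in> L" unfolding Lset_def x by simp
      then show "x \<in> Fx" unfolding Fx_def L0_def x using a by simp
    qed
  qed
  have "card Fx = card {a. 0 \<le> a \<and> a < int d \<and> int d dvd ?m * a}"
    unfolding Fx_eq by (rule card_image) (simp add: inj_on_def fun_eq_iff)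
  also have "\<dots> = nat gg" unfolding gg_def by (rule count_mult_dvd) (use dpos in simp)
  finally have cfix: "card {M\<in>?S. tm M = M} = nat gg" using cfix1 by simp
  show ?thesis using orbit_count[OF fin tS t3] cS cfix unfolding cls by simp
qed


lemma class_sub: "M \<in> conj_class G (Mx \<xi> x k) \<Longrightarrow> \<exists>y. M = Mx \<xi> y k"
  unfolding class_formula by blast

lemma class_self: "Mx \<xi> x k \<in> conj_class G (Mx \<xi> x k)"
  unfolding class_formula
  apply (intro CollectI exI[where x = "\<lambda>i. 0"] exI[where x = 0])
  using L_zero by simp

lemma gg_nat: "nat gg = gcd d (q ^ 2 - q + 1)"
proof -
  have "q \<le> q ^ 2" by (simp add: power2_eq_square)
  then have "int (q ^ 2 - q + 1) = int q ^ 2 - int q + 1" by (simp add: of_nat_diff)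
  then have "gg = int (gcd d (q ^ 2 - q + 1))" unfolding gg_def by (metis gcd_int_int_eq)
  then show ?thesis by simp
qed

lemma main_count:
  "real (card (conj_classes GG)) = (real d ^ 2 + 8 * real (gcd d (q ^ 2 - q + 1))) / 3"
proof -
  define S where "S k = (\<lambda>x. Mx \<xi> x k) ` L" for k
  define C where "C k = conj_class G ` S k" for k
  have GS: "G = S 0 \<union> S 1 \<union> S 2"
  proof
    show "G \<subseteq> S 0 \<union> S 1 \<union> S 2"
    proof
      fix M assume "M \<in> G"
      then obtain x k where M: "M = Mx \<xi> x k" "x \<in> L" unfolding Gset_def by blast
      then have "M \<in> S k" unfolding S_def by blast
      then show "M \<in> S 0 \<union> S 1 \<union> S 2" using ex3[of k] by auto
    qed
    show "S 0 \<union> S 1 \<union> S 2 \<subseteq> G" unfolding S_def Gset_def by blast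
  qed
  have CC: "conj_classes GG = C 0 \<union> C 1 \<union> C 2"
    unfolding GG_eq conj_classes_def C_def GS by (simp add: image_Un)
  have finS: "finite (S k)" for k unfolding S_def img_L0 using fin_L0 by simp
  have finC: "finite (C k)" for k unfolding C_def using finS by simp
  have disj: "C k \<inter> C l = {}" if "k \<noteq> l" for k l
  proof (rule ccontr)
    assume "C k \<inter> C l \<noteq> {}"
    then obtain c where c1: "c \<in> C k" and c2: "c \<in> C l" by blast
    obtain x where x: "c = conj_class G (Mx \<xi> x k)" using c1 unfolding C_def S_def by blast
    obtain y where y: "c = conj_class G (Mx \<xi> y l)" using c2 unfolding C_def S_def by blast
    have "Mx \<xi> x k \<in> c" using class_self x by simp
    then obtain z where "Mx \<xi> x k = Mx \<xi> z l" using class_sub y by blast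
    then show False using Mx_eqD[OF prim] that by blast
  qed
  have c01: "card (C 0 \<union> C 1) = card (C 0) + card (C 1)"
    by (rule card_Un_disjoint[OF finC finC disj]) simp
  have "(C 0 \<union> C 1) \<inter> C 2 = {}" using disj[of 0 2] disj[of 1 2] by auto
  then have c012: "card (C 0 \<union> C 1 \<union> C 2) = card (C 0) + card (C 1) + card (C 2)"
    using card_Un_disjoint[of "C 0 \<union> C 1" "C 2"] finC c01 by simp
  have h0: "3 * card (C 0) = d ^ 2 + 2 * nat gg" unfolding C_def S_def img_L0 by (rule card0)
  have h1: "card (C 1) = nat gg" unfolding C_def S_def by (rule card12) simp
  have h2: "card (C 2) = nat gg" unfolding C_def S_def by (rule card12) simp
  have "3 * card (conj_classes GG) = d ^ 2 + 8 * gcd d (q ^ 2 - q + 1)"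
    unfolding CC c012 using h0 h1 h2 gg_nat by simp
  then have "3 * real (card (conj_classes GG)) = real d ^ 2 + 8 * real (gcd d (q ^ 2 - q + 1))"
    by (metis (mono_tags, opaque_lifting) of_nat_add of_nat_mult of_nat_numeral of_nat_power)
  then show ?thesis by simp
qed

end

theorem mainTheorem9:
  fixes d q :: nat and \<xi> :: complex
  assumes "q < d" and "gcd d q = 1" and "d dvd q ^ 3 + 1"
    and "primitive_root_of_unity d \<xi>"
  shows "real (card (conj_classes (gen_mat_group {diagA \<xi> q, permB})))
           = (real d ^ 2 + 8 * real (gcd d (q ^ 2 - q + 1))) / 3"
proof -
  interpret gsetup d q \<xi> using assms by unfold_locales
  show ?thesis by (rule main_count)
qed

end
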